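(* Let $m\le k\le n$ be positive integers, $\mathbf a_1,\dots,\mathbf a_n\in\mathbb R^m$, $\mathbf A=[\mathbf a_1,\dots,\mathbf a_n]\in\mathbb R^{m\times n}$, and let $\hat{\mathbf x}$ (with $(\hat{\mathbf x},\hat w)$) be an optimal solution of the convex relaxation $\max\{w: w\le[\det(\sum_{i\in[n]}x_i\mathbf a_i\mathbf a_i^\top)]^{1/m},\ \sum_i x_i=k,\ \mathbf x\in[0,1]^n\}$. Let $S\subseteq[n]$ with $|S|=s\le k$. For indeterminates $t_1,t_2,t_3$ define $\mathbf y\in\mathbb R^n$ by $y_i=t_3$ if $i\in S$ and $y_i=\hat x_i t_2$ otherwise, and $$F(t_1,t_2,t_3)=\det\Big(\mathbf I_n+t_1\,\mathrm{diag}(\mathbf y)^{1/2}\mathbf A^\top\mathbf A\,\mathrm{diag}(\mathbf y)^{1/2}+\mathrm{diag}(\mathbf y)\Big).$$ Then the coefficient of $t_1^{m}t_2^{k-s}t_3^{s}$ in $F(t_1,t_2,t_3)$ equals $$\sum_{\substack{R\subseteq[n],\,|R|=m\\ r:=|R\setminus S|\le k-s}}\ \prod_{j\in R\setminus S}\hat x_j\,\det\Big(\sum_{i\in R}\mathbf a_i\mathbf a_i^\top\Big)\sum_{\substack{W\subseteq[n]\setminus(S\cup R)\\ |W|=k-s-r}}\ \prod_{j\in W}\hat x_j.$$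
   Context: $[n]=\{1,\dots,n\}$, $\mathbf I_n$ is the $n\times n$ identity matrix and $\mathrm{diag}(\mathbf y)$ the diagonal matrix with diagonal $\mathbf y$. $F$ is regarded as a polynomial in $t_1,t_2,t_3$. *)

theory Defs
  imports Complex_Main "Jordan_Normal_Form.Determinant"
begin

text \<open>Indices are 0-based: [n] is rendered as {0..<n}; column i of A is a_(i+1).\<close>

definition outer_sum :: "real mat \<Rightarrow> (nat \<Rightarrow> real) \<Rightarrow> nat set \<Rightarrow> real mat" where
  "outer_sum A w I = mat (dim_row A) (dim_row A)
     (\<lambda>(p,q). \<Sum>i\<in>I. w i * A $$ (p,i) * A $$ (q,i))"

definition feasible :: "nat \<Rightarrow> nat \<Rightarrow> (nat \<Rightarrow> real) \<Rightarrow> bool" where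
  "feasible n k x \<longleftrightarrow> (\<forall>i<n. 0 \<le> x i \<and> x i \<le> 1) \<and> (\<Sum>i<n. x i) = real k"

definition objective :: "real mat \<Rightarrow> (nat \<Rightarrow> real) \<Rightarrow> real" where
  "objective A x = root (dim_row A) (det (outer_sum A x {0..<dim_col A}))"

definition optimal_sol :: "real mat \<Rightarrow> nat \<Rightarrow> (nat \<Rightarrow> real) \<Rightarrow> bool" where
  "optimal_sol A k x \<longleftrightarrow> feasible (dim_col A) k x \<and>
     (\<forall>z. feasible (dim_col A) k z \<longrightarrow> objective A z \<le> objective A x)"

definition diag_vec :: "nat \<Rightarrow> (nat \<Rightarrow> real) \<Rightarrow> real mat" where
  "diag_vec n y = mat n n (\<lambda>(i,j). if i = j then y i else 0)"

definition yvec :: "nat set \<Rightarrow> (nat \<Rightarrow> real) \<Rightarrow> real \<Rightarrow> real \<Rightarrow> nat \<Rightarrow> real" where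
  "yvec S x t2 t3 = (\<lambda>i. if i \<in> S then t3 else x i * t2)"

definition Fdet :: "real mat \<Rightarrow> nat set \<Rightarrow> (nat \<Rightarrow> real) \<Rightarrow> real \<Rightarrow> real \<Rightarrow> real \<Rightarrow> real" where
  "Fdet A S x t1 t2 t3 =
     (let n = dim_col A; y = yvec S x t2 t3; D = diag_vec n (\<lambda>i. sqrt (y i)) in
      det (one_mat n + t1 \<cdot>\<^sub>m (D * transpose_mat A * A * D) + diag_vec n y))"

text \<open>c is the (finitely supported) coefficient family of a polynomial in t1,t2,t3
  that agrees with f wherever f is defined as in the paper (t2, t3 >= 0, so that the
  square roots diag(y)^(1/2) are real).\<close>
definition poly3_rep :: "(nat \<Rightarrow> nat \<Rightarrow> nat \<Rightarrow> real) \<Rightarrow> (real \<Rightarrow> real \<Rightarrow> real \<Rightarrow> real) \<Rightarrow> bool" where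
  "poly3_rep c f \<longleftrightarrow> (\<exists>N. (\<forall>a b d. (N < a \<or> N < b \<or> N < d) \<longrightarrow> c a b d = 0) \<and>
     (\<forall>t1 t2 t3. 0 \<le> t2 \<longrightarrow> 0 \<le> t3 \<longrightarrow>
        f t1 t2 t3 = (\<Sum>a\<le>N. \<Sum>b\<le>N. \<Sum>d\<le>N. c a b d * t1 ^ a * t2 ^ b * t3 ^ d)))"

end

theory Submission
  imports Defs
begin


lemma poly1_unique:
  fixes a :: "nat \<Rightarrow> real"
  assumes "\<And>x. 0 \<le> x \<Longrightarrow> (\<Sum>i\<le>N. a i * x ^ i) = 0"
  shows "\<forall>i\<le>N. a i = 0"
proof (rule ccontr)
  assume "\<not> (\<forall>i\<le>N. a i = 0)"
  then obtain i where "i \<le> N" "a i \<noteq> 0" by auto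
  hence fin: "finite {z. (\<Sum>i\<le>N. a i * z ^ i) = 0}" by (intro polyfun_roots_finite) auto
  have "{0::real..} \<subseteq> {z. (\<Sum>i\<le>N. a i * z ^ i) = 0}" using assms by auto
  hence "finite {0::real..}" using fin finite_subset by blast
  thus False by (simp add: infinite_Ici)
qed

lemma poly3_unique:
  fixes e :: "nat \<Rightarrow> nat \<Rightarrow> nat \<Rightarrow> real"
  assumes H: "\<And>t1 t2 t3. 0 \<le> t2 \<Longrightarrow> 0 \<le> t3 \<Longrightarrow>
     (\<Sum>a\<le>N. \<Sum>b\<le>N. \<Sum>d\<le>N. e a b d * t1 ^ a * t2 ^ b * t3 ^ d) = 0"
  and "a \<le> N" "b \<le> N" "d \<le> N"
  shows "e a b d = 0"
proof -
  have A: "(\<Sum>b\<le>N. \<Sum>d\<le>N. e a b d * t2 ^ b * t3 ^ d) = 0" if "0 \<le> t2" "0 \<le> t3" "a \<le> N" for a t2 t3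
  proof -
    have "(\<Sum>a\<le>N. (\<Sum>b\<le>N. \<Sum>d\<le>N. e a b d * t2 ^ b * t3 ^ d) * t1 ^ a) = 0" if "0 \<le> t1" for t1
      using H[OF \<open>0 \<le> t2\<close> \<open>0 \<le> t3\<close>, of t1] by (simp add: sum_distrib_left sum_distrib_right mult_ac)
    from poly1_unique[OF this] that show ?thesis by auto
  qed
  have B: "(\<Sum>d\<le>N. e a b d * t3 ^ d) = 0" if "0 \<le> t3" "b \<le> N" for b t3
  proof -
    have "(\<Sum>b\<le>N. (\<Sum>d\<le>N. e a b d * t3 ^ d) * t2 ^ b) = 0" if "0 \<le> t2" for t2
      using A[OF \<open>0 \<le> t2\<close> \<open>0 \<le> t3\<close> \<open>a \<le> N\<close>] by (simp add: sum_distrib_left sum_distrib_right mult_ac)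
    from poly1_unique[OF this] that show ?thesis by auto
  qed
  have "\<forall>d\<le>N. e a b d = 0" using B[OF _ \<open>b \<le> N\<close>] by (intro poly1_unique) auto
  thus ?thesis using assms by auto
qed

lemma sum_atMost_ext:
  fixes f :: "nat \<Rightarrow> real"
  assumes "N \<le> M" "\<And>i. N < i \<Longrightarrow> f i = 0"
  shows "(\<Sum>i\<le>M. f i) = (\<Sum>i\<le>N. f i)"
  by (rule sum.mono_neutral_right) (use assms in auto)

lemma sum3_ext:
  assumes "\<forall>a b d. (N < a \<or> N < b \<or> N < d) \<longrightarrow> c a b d = 0" "N \<le> M"
  shows "(\<Sum>a\<le>M. \<Sum>b\<le>M. \<Sum>d\<le>M. c a b d * t1 ^ a * t2 ^ b * (t3::real) ^ d)
       = (\<Sum>a\<le>N. \<Sum>b\<le>N. \<Sum>d\<le>N. c a b d * t1 ^ a * t2 ^ b * t3 ^ d)"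
proof -
  have "(\<Sum>a\<le>M. \<Sum>b\<le>M. \<Sum>d\<le>M. c a b d * t1 ^ a * t2 ^ b * t3 ^ d)
      = (\<Sum>a\<le>M. \<Sum>b\<le>M. \<Sum>d\<le>N. c a b d * t1 ^ a * t2 ^ b * t3 ^ d)"
    by (intro sum.cong refl sum_atMost_ext) (use assms in auto)
  also have "\<dots> = (\<Sum>a\<le>M. \<Sum>b\<le>N. \<Sum>d\<le>N. c a b d * t1 ^ a * t2 ^ b * t3 ^ d)"
    by (intro sum.cong refl sum_atMost_ext) (use assms in auto)
  also have "\<dots> = (\<Sum>a\<le>N. \<Sum>b\<le>N. \<Sum>d\<le>N. c a b d * t1 ^ a * t2 ^ b * t3 ^ d)"
    by (intro sum.cong refl sum_atMost_ext) (use assms in auto)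
  finally show ?thesis .
qed

definition detS :: "nat set \<Rightarrow> (nat \<Rightarrow> nat \<Rightarrow> real) \<Rightarrow> real" where
  "detS T M = (\<Sum>p\<in>{p. p permutes T}. of_int (sign p) * (\<Prod>i\<in>T. M i (p i)))"

lemma permutes_restrict':
  assumes "p permutes U" "T \<subseteq> U" "\<forall>i\<in>U-T. p i = i"
  shows "p permutes T"
  using assms unfolding permutes_def by (metis Diff_iff)

lemma prod_if_fix:
  assumes "finite A"
  shows "(\<Prod>i\<in>A. if p i = i then l i else (0::real)) = (if \<forall>i\<in>A. p i = i then (\<Prod>i\<in>A. l i) else 0)"
proof (cases "\<forall>i\<in>A. p i = i")
  case True thus ?thesis by (auto intro: prod.cong)
next
  case False
  then obtain i where "i \<in> A" "p i \<noteq> i" by auto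
  thus ?thesis using assms by (auto intro!: prod_zero)
qed

lemma det_expand:
  assumes fin: "finite U"
  shows "(\<Sum>p\<in>{p. p permutes U}. of_int (sign p) * (\<Prod>i\<in>U. M i (p i) + (if p i = i then l i else 0)))
       = (\<Sum>T\<in>Pow U. (\<Prod>i\<in>U-T. l i) * detS T M)"
proof -
  have "(\<Sum>p\<in>{p. p permutes U}. of_int (sign p) * (\<Prod>i\<in>U. M i (p i) + (if p i = i then l i else 0)))
     = (\<Sum>p\<in>{p. p permutes U}. \<Sum>T\<in>Pow U. of_int (sign p) * ((\<Prod>i\<in>T. M i (p i)) *
          (if \<forall>i\<in>U-T. p i = i then (\<Prod>i\<in>U-T. l i) else 0)))"
    using fin by (simp add: prod_add sum_distrib_left prod_if_fix)
  also have "\<dots> = (\<Sum>T\<in>Pow U. \<Sum>p\<in>{p. p permutes U}. of_int (sign p) * ((\<Prod>i\<in>T. M i (p i)) *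
          (if \<forall>i\<in>U-T. p i = i then (\<Prod>i\<in>U-T. l i) else 0)))"
    by (rule sum.swap)
  also have "\<dots> = (\<Sum>T\<in>Pow U. (\<Prod>i\<in>U-T. l i) * detS T M)"
  proof (rule sum.cong[OF refl])
    fix T assume T: "T \<in> Pow U"
    have fp: "finite {p. p permutes U}" using fin by (simp add: finite_permutations)
    have eq: "{p \<in> {p. p permutes U}. \<forall>i\<in>U-T. p i = i} = {p. p permutes T}"
      using T permutes_restrict'[of _ U T] by (auto intro: permutes_subset permutes_not_in)
    have "(\<Sum>p\<in>{p. p permutes U}. of_int (sign p) * ((\<Prod>i\<in>T. M i (p i)) *
          (if \<forall>i\<in>U-T. p i = i then (\<Prod>i\<in>U-T. l i) else 0)))
        = (\<Sum>p\<in>{p. p permutes U}. if \<forall>i\<in>U-T. p i = i then (\<Prod>i\<in>U-T. l i) * (of_int (sign p) * (\<Prod>i\<in>T. M i (p i))) else 0)"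
      by (intro sum.cong refl) auto
    also have "\<dots> = (\<Sum>p\<in>{p \<in> {p. p permutes U}. \<forall>i\<in>U-T. p i = i}. (\<Prod>i\<in>U-T. l i) * (of_int (sign p) * (\<Prod>i\<in>T. M i (p i))))"
      by (rule sum.inter_filter[OF fp, symmetric])
    also have "\<dots> = (\<Prod>i\<in>U-T. l i) * detS T M"
      unfolding eq detS_def by (simp add: sum_distrib_left)
    finally show "(\<Sum>p\<in>{p. p permutes U}. of_int (sign p) * ((\<Prod>i\<in>T. M i (p i)) *
          (if \<forall>i\<in>U-T. p i = i then (\<Prod>i\<in>U-T. l i) else 0))) = (\<Prod>i\<in>U-T. l i) * detS T M" .
  qed
  finally show ?thesis .
qed



lemma detS_reindex:
  fixes m :: nat
  assumes f: "bij_betw f {0..<m} R"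
  shows "detS R M = (\<Sum>\<tau>\<in>{\<tau>. \<tau> permutes {0..<m}}. of_int (sign \<tau>) * (\<Prod>l=0..<m. M (f l) (f (\<tau> l))))"
proof -
  let ?A = "{0..<m}"
  define \<Phi> where "\<Phi> = (\<lambda>\<pi> x. if x \<in> R then f (\<pi> (inv_into ?A f x)) else x)"
  have bij: "bij_betw \<Phi> {\<pi>. \<pi> permutes ?A} {\<pi>. \<pi> permutes R}"
    unfolding \<Phi>_def by (rule bij_betw_permutations[OF f])
  have "detS R M = (\<Sum>\<sigma>\<in>{\<pi>. \<pi> permutes R}. of_int (sign \<sigma>) * (\<Prod>i\<in>R. M i (\<sigma> i)))"
    by (simp add: detS_def)
  also have "\<dots> = (\<Sum>\<tau>\<in>{\<pi>. \<pi> permutes ?A}. of_int (sign (\<Phi> \<tau>)) * (\<Prod>i\<in>R. M i (\<Phi> \<tau> i)))"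
    by (rule sum.reindex_bij_betw[OF bij, symmetric])
  also have "\<dots> = (\<Sum>\<tau>\<in>{\<tau>. \<tau> permutes {0..<m}}. of_int (sign \<tau>) * (\<Prod>l=0..<m. M (f l) (f (\<tau> l))))"
  proof (rule sum.cong[OF refl])
    fix \<tau> assume "\<tau> \<in> {\<pi>. \<pi> permutes ?A}"
    hence \<tau>: "\<tau> permutes ?A" by simp
    interpret pb: permutes_bij_finite \<tau> ?A R f "inv_into ?A f" "\<Phi> \<tau>"
    proof unfold_locales
      show "\<tau> permutes ?A" by (rule \<tau>)
      show "bij_betw f ?A R" by (rule f)
      show "finite ?A" by (rule finite_atLeastLessThan)
      show "\<And>x. x \<in> ?A \<Longrightarrow> inv_into ?A f (f x) = x" using f by (simp add: bij_betw_def)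
      show "\<Phi> \<tau> \<equiv> \<lambda>x. if x \<in> R then f (\<tau> (inv_into ?A f x)) else x" unfolding \<Phi>_def by (rule reflexive)
    qed
    have s: "sign (\<Phi> \<tau>) = sign \<tau>" using pb.sign_p' by simp
    have "(\<Prod>i\<in>R. M i (\<Phi> \<tau> i)) = (\<Prod>l\<in>?A. M (f l) (\<Phi> \<tau> (f l)))"
      by (rule prod.reindex_bij_betw[OF f, symmetric])
    also have "\<dots> = (\<Prod>l\<in>?A. M (f l) (f (\<tau> l)))"
    proof (rule prod.cong[OF refl])
      fix l assume l: "l \<in> ?A"
      have "f l \<in> R" using f l by (auto simp: bij_betw_def)
      moreover have "inv_into ?A f (f l) = l" using f l by (simp add: bij_betw_def)
      ultimately show "M (f l) (\<Phi> \<tau> (f l)) = M (f l) (f (\<tau> l))" by (simp add: \<Phi>_def)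
    qed
    finally show "of_int (sign (\<Phi> \<tau>)) * (\<Prod>i\<in>R. M i (\<Phi> \<tau> i)) =
        of_int (sign \<tau>) * (\<Prod>l=0..<m. M (f l) (f (\<tau> l)))" using s by simp
  qed
  finally show ?thesis .
qed

lemma gram_det:
  assumes "dim_row A = m" "R \<subseteq> {0..<dim_col A}" "card R = m"
  shows "detS R (\<lambda>i j. \<Sum>p=0..<m. A $$ (p,i) * A $$ (p,j)) = det (outer_sum A (\<lambda>_. 1) R)"
proof -
  have "finite R" using assms(2) finite_subset by blast
  then obtain f where f: "bij_betw f {0..<m} R" using ex_bij_betw_nat_finite assms(3) by metis
  define Bm where "Bm = mat m m (\<lambda>(p,l). A $$ (p, f l))"
  have Bc: "Bm \<in> carrier_mat m m" "transpose_mat Bm \<in> carrier_mat m m" unfolding Bm_def by auto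
  have "detS R (\<lambda>i j. \<Sum>p=0..<m. A $$ (p,i) * A $$ (p,j))
     = (\<Sum>\<tau>\<in>{\<tau>. \<tau> permutes {0..<m}}. of_int (sign \<tau>) * (\<Prod>l=0..<m. \<Sum>p=0..<m. A $$ (p,f l) * A $$ (p,f (\<tau> l))))"
    by (rule detS_reindex[OF f])
  also have "\<dots> = det (transpose_mat Bm * Bm)"
  proof -
    have "transpose_mat Bm * Bm \<in> carrier_mat m m" using Bc by auto
    hence "det (transpose_mat Bm * Bm) = (\<Sum>\<tau>\<in>{\<tau>. \<tau> permutes {0..<m}}. of_int (sign \<tau>) * (\<Prod>l=0..<m. (transpose_mat Bm * Bm) $$ (l, \<tau> l)))"
      by (rule det_def')
    also have "\<dots> = (\<Sum>\<tau>\<in>{\<tau>. \<tau> permutes {0..<m}}. of_int (sign \<tau>) * (\<Prod>l=0..<m. \<Sum>p=0..<m. A $$ (p,f l) * A $$ (p,f (\<tau> l))))"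
    proof (intro sum.cong refl arg_cong2[where f="(*)"] prod.cong)
      fix \<tau> l assume "\<tau> \<in> {\<tau>. \<tau> permutes {0..<m}}" "l \<in> {0..<m}"
      hence "\<tau> l < m" "l < m" by (auto simp: permutes_in_image)
      thus "(transpose_mat Bm * Bm) $$ (l, \<tau> l) = (\<Sum>p=0..<m. A $$ (p,f l) * A $$ (p,f (\<tau> l)))"
        unfolding Bm_def by (simp add: scalar_prod_def)
    qed
    finally show ?thesis by simp
  qed
  also have "\<dots> = det (Bm * transpose_mat Bm)"
    using Bc by (simp add: det_mult[OF Bc(2) Bc(1)] det_mult[OF Bc(1) Bc(2)])
  also have "Bm * transpose_mat Bm = outer_sum A (\<lambda>_. 1) R"
  proof (rule eq_matI)
    fix p q assume pq: "p < dim_row (outer_sum A (\<lambda>_. 1) R)" "q < dim_col (outer_sum A (\<lambda>_. 1) R)"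
    hence "p < m" "q < m" using assms(1) by (auto simp: outer_sum_def)
    hence "(Bm * transpose_mat Bm) $$ (p,q) = (\<Sum>l\<in>{0..<m}. A $$ (p, f l) * A $$ (q, f l))"
      unfolding Bm_def by (simp add: scalar_prod_def)
    also have "\<dots> = (\<Sum>i\<in>R. A $$ (p, i) * A $$ (q, i))"
      by (rule sum.reindex_bij_betw[OF f])
    also have "\<dots> = outer_sum A (\<lambda>_. 1) R $$ (p,q)"
      using \<open>p < m\<close> \<open>q < m\<close> assms(1) by (simp add: outer_sum_def)
    finally show "(Bm * transpose_mat Bm) $$ (p,q) = outer_sum A (\<lambda>_. 1) R $$ (p,q)" .
  qed (use assms(1) in \<open>auto simp: outer_sum_def Bm_def\<close>)
  finally show ?thesis .
qed



lemma mult_diag_right: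
  assumes "i < dim_row X" "j < n" "dim_col X = n"
  shows "(X * diag_vec n v) $$ (i,j) = X $$ (i,j) * v j"
proof -
  have "(X * diag_vec n v) $$ (i,j) = (\<Sum>l\<in>{0..<n}. X $$ (i,l) * (if l = j then v l else 0))"
    using assms by (simp add: scalar_prod_def diag_vec_def)
  also have "\<dots> = (\<Sum>l\<in>{0..<n}. if l = j then X $$ (i,j) * v j else 0)"
    by (intro sum.cong) auto
  also have "\<dots> = X $$ (i,j) * v j" using assms by simp
  finally show ?thesis .
qed

lemma mult_diag_left:
  assumes "i < n" "j < dim_col X" "dim_row X = n"
  shows "(diag_vec n v * X) $$ (i,j) = v i * X $$ (i,j)"
proof -
  have "(diag_vec n v * X) $$ (i,j) = (\<Sum>l\<in>{0..<n}. (if i = l then v i else 0) * X $$ (l,j))"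
    using assms by (simp add: scalar_prod_def diag_vec_def)
  also have "\<dots> = (\<Sum>l\<in>{0..<n}. if i = l then v i * X $$ (i,j) else 0)"
    by (intro sum.cong) auto
  also have "\<dots> = v i * X $$ (i,j)" using assms by simp
  finally show ?thesis .
qed

lemma B_entry:
  assumes "dim_row A = m" "dim_col A = n" "i < n" "j < n"
  shows "(one_mat n + t1 \<cdot>\<^sub>m (diag_vec n sq * transpose_mat A * A * diag_vec n sq) + diag_vec n y) $$ (i,j)
    = t1 * (sq i * sq j * (\<Sum>p=0..<m. A $$ (p,i) * A $$ (p,j))) + (if j = i then 1 + y i else 0)"
proof -
  have d1: "dim_row (diag_vec n sq * transpose_mat A) = n" "dim_col (diag_vec n sq * transpose_mat A) = m"
    using assms by (auto simp: diag_vec_def)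
  have e1: "(diag_vec n sq * transpose_mat A) $$ (i,p) = sq i * A $$ (p,i)" if "p < m" for p
    using mult_diag_left[of i n p "transpose_mat A" sq] assms that by simp
  have "(diag_vec n sq * transpose_mat A * A) $$ (i,j) = (\<Sum>p=0..<m. (diag_vec n sq * transpose_mat A) $$ (i,p) * A $$ (p,j))"
    using assms d1 by (simp add: scalar_prod_def)
  also have "\<dots> = sq i * (\<Sum>p=0..<m. A $$ (p,i) * A $$ (p,j))"
    by (simp add: e1 sum_distrib_left mult.assoc)
  finally have e2: "(diag_vec n sq * transpose_mat A * A) $$ (i,j) = sq i * (\<Sum>p=0..<m. A $$ (p,i) * A $$ (p,j))" .
  have e3: "(diag_vec n sq * transpose_mat A * A * diag_vec n sq) $$ (i,j) = sq i * (\<Sum>p=0..<m. A $$ (p,i) * A $$ (p,j)) * sq j"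
    using mult_diag_right[of i "diag_vec n sq * transpose_mat A * A" j n sq] assms d1 e2 by simp
  have d2: "dim_row (diag_vec n sq * transpose_mat A * A * diag_vec n sq) = n" "dim_col (diag_vec n sq * transpose_mat A * A * diag_vec n sq) = n"
    using assms by (auto simp: diag_vec_def)
  show ?thesis using assms d2 e3 by (auto simp: diag_vec_def)
qed

lemma detS_scale:
  assumes "finite T" "\<forall>i\<in>T. 0 \<le> y i"
  shows "detS T (\<lambda>i j. t1 * (sqrt (y i) * sqrt (y j) * G i j)) = t1 ^ card T * (\<Prod>i\<in>T. y i) * detS T G"
proof -
  have "detS T (\<lambda>i j. t1 * (sqrt (y i) * sqrt (y j) * G i j))
     = (\<Sum>p\<in>{p. p permutes T}. t1 ^ card T * (\<Prod>i\<in>T. y i) * (of_int (sign p) * (\<Prod>i\<in>T. G i (p i))))"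
    unfolding detS_def
  proof (rule sum.cong[OF refl])
    fix p assume "p \<in> {p. p permutes T}"
    hence p: "p permutes T" by simp
    have pp: "(\<Prod>i\<in>T. sqrt (y (p i))) = (\<Prod>i\<in>T. sqrt (y i))"
      using prod.permute[OF p, of "\<lambda>i. sqrt (y i)"] by (simp add: comp_def)
    have sq: "(\<Prod>i\<in>T. sqrt (y i)) * (\<Prod>i\<in>T. sqrt (y i)) = (\<Prod>i\<in>T. y i)"
      unfolding prod.distrib[symmetric] using assms(2) by (intro prod.cong) auto
    have "(\<Prod>i\<in>T. t1 * (sqrt (y i) * sqrt (y (p i)) * G i (p i)))
        = t1 ^ card T * ((\<Prod>i\<in>T. sqrt (y i)) * (\<Prod>i\<in>T. sqrt (y (p i)))) * (\<Prod>i\<in>T. G i (p i))"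
      by (simp add: prod.distrib mult.assoc)
    also have "\<dots> = t1 ^ card T * (\<Prod>i\<in>T. y i) * (\<Prod>i\<in>T. G i (p i))" using pp sq by simp
    finally show "of_int (sign p) * (\<Prod>i\<in>T. t1 * (sqrt (y i) * sqrt (y (p i)) * G i (p i)))
        = t1 ^ card T * (\<Prod>i\<in>T. y i) * (of_int (sign p) * (\<Prod>i\<in>T. G i (p i)))" by simp
  qed
  also have "\<dots> = t1 ^ card T * (\<Prod>i\<in>T. y i) * detS T G"
    by (simp add: detS_def sum_distrib_left)
  finally show ?thesis .
qed

lemma F_expand:
  assumes "dim_row A = m" "dim_col A = n" "\<forall>i<n. 0 \<le> xh i" "0 \<le> t2" "0 \<le> t3"
  shows "Fdet A S xh t1 t2 t3 = (\<Sum>T\<in>Pow {0..<n}. (\<Prod>i\<in>{0..<n}-T. 1 + yvec S xh t2 t3 i) *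
     (t1 ^ card T * (\<Prod>i\<in>T. yvec S xh t2 t3 i) * detS T (\<lambda>i j. \<Sum>p=0..<m. A $$ (p,i) * A $$ (p,j))))"
proof -
  define y where "y = yvec S xh t2 t3"
  define G where "G = (\<lambda>i j. \<Sum>p=0..<m. A $$ (p,i) * A $$ (p,j))"
  define sq where "sq = (\<lambda>i. sqrt (y i))"
  define B where "B = one_mat n + t1 \<cdot>\<^sub>m (diag_vec n sq * transpose_mat A * A * diag_vec n sq) + diag_vec n y"
  have ypos: "\<forall>i<n. 0 \<le> y i" using assms unfolding y_def yvec_def by auto
  have F: "Fdet A S xh t1 t2 t3 = det B"
    unfolding Fdet_def Let_def B_def sq_def y_def using assms by simp
  have Bc: "B \<in> carrier_mat n n" unfolding B_def by (auto simp: diag_vec_def)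
  have "det B = (\<Sum>p\<in>{p. p permutes {0..<n}}. of_int (sign p) * (\<Prod>i=0..<n. B $$ (i, p i)))"
    by (rule det_def'[OF Bc])
  also have "\<dots> = (\<Sum>p\<in>{p. p permutes {0..<n}}. of_int (sign p) *
      (\<Prod>i\<in>{0..<n}. t1 * (sq i * sq (p i) * G i (p i)) + (if p i = i then 1 + y i else 0)))"
  proof (intro sum.cong refl arg_cong2[where f="(*)"] prod.cong)
    fix p i assume "p \<in> {p. p permutes {0..<n}}" "i \<in> {0..<n}"
    hence "p i < n" "i < n" by (auto simp: permutes_in_image)
    thus "B $$ (i, p i) = t1 * (sq i * sq (p i) * G i (p i)) + (if p i = i then 1 + y i else 0)"
      unfolding B_def G_def using B_entry[OF assms(1,2)] by simp
  qed
  also have "\<dots> = (\<Sum>T\<in>Pow {0..<n}. (\<Prod>i\<in>{0..<n}-T. 1 + y i) * detS T (\<lambda>i j. t1 * (sq i * sq j * G i j)))"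
    by (rule det_expand) simp
  also have "\<dots> = (\<Sum>T\<in>Pow {0..<n}. (\<Prod>i\<in>{0..<n}-T. 1 + y i) * (t1 ^ card T * (\<Prod>i\<in>T. y i) * detS T G))"
  proof (rule sum.cong[OF refl])
    fix T assume "T \<in> Pow {0..<n}"
    hence "finite T" "\<forall>i\<in>T. 0 \<le> y i" using ypos finite_subset by auto
    thus "(\<Prod>i\<in>{0..<n}-T. 1 + y i) * detS T (\<lambda>i j. t1 * (sq i * sq j * G i j)) =
          (\<Prod>i\<in>{0..<n}-T. 1 + y i) * (t1 ^ card T * (\<Prod>i\<in>T. y i) * detS T G)"
      unfolding sq_def by (simp add: detS_scale)
  qed
  finally show ?thesis using F unfolding y_def G_def by simp
qed



lemma yprod:
  assumes "finite W"
  shows "(\<Prod>i\<in>W. yvec S xh t2 t3 i) = t3 ^ card (W \<inter> S) * t2 ^ card (W - S) * (\<Prod>i\<in>W - S. xh i)"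
proof -
  have "(\<Prod>i\<in>W. yvec S xh t2 t3 i) = (\<Prod>i\<in>W \<inter> S. yvec S xh t2 t3 i) * (\<Prod>i\<in>W - S. yvec S xh t2 t3 i)"
    using assms by (rule prod.Int_Diff)
  also have "(\<Prod>i\<in>W \<inter> S. yvec S xh t2 t3 i) = t3 ^ card (W \<inter> S)"
    by (simp add: yvec_def)
  also have "(\<Prod>i\<in>W - S. yvec S xh t2 t3 i) = (\<Prod>i\<in>W - S. xh i * t2)"
    by (intro prod.cong) (auto simp: yvec_def)
  also have "\<dots> = (\<Prod>i\<in>W - S. xh i) * t2 ^ card (W - S)"
    by (simp add: prod.distrib)
  finally show ?thesis by simp
qed

lemma expand2:
  assumes "finite U"
  shows "(\<Sum>T\<in>Pow U. (\<Prod>i\<in>U-T. 1 + yvec S xh t2 t3 i) * (t1 ^ card T * (\<Prod>i\<in>T. yvec S xh t2 t3 i) * g T))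
   = (\<Sum>T\<in>Pow U. \<Sum>V\<in>Pow (U-T). (g T * (\<Prod>i\<in>(T \<union> V) - S. xh i)) * t1 ^ card T * t2 ^ card ((T \<union> V) - S) * t3 ^ card ((T \<union> V) \<inter> S))"
proof (rule sum.cong[OF refl])
  fix T assume T: "T \<in> Pow U"
  let ?y = "yvec S xh t2 t3"
  have fT: "finite T" using T assms finite_subset by auto
  have "(\<Prod>i\<in>U-T. 1 + ?y i) = (\<Sum>V\<in>Pow (U-T). \<Prod>i\<in>V. ?y i)"
    using prod_add[of "U-T" ?y "\<lambda>_. 1"] assms by (simp add: add.commute)
  hence "(\<Prod>i\<in>U-T. 1 + ?y i) * (t1 ^ card T * (\<Prod>i\<in>T. ?y i) * g T)
      = (\<Sum>V\<in>Pow (U-T). (\<Prod>i\<in>V. ?y i) * (t1 ^ card T * (\<Prod>i\<in>T. ?y i) * g T))"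
    by (simp add: sum_distrib_right)
  also have "\<dots> = (\<Sum>V\<in>Pow (U-T). (g T * (\<Prod>i\<in>(T \<union> V) - S. xh i)) * t1 ^ card T * t2 ^ card ((T \<union> V) - S) * t3 ^ card ((T \<union> V) \<inter> S))"
  proof (rule sum.cong[OF refl])
    fix V assume V: "V \<in> Pow (U-T)"
    have fV: "finite V" using V assms finite_subset by auto
    have "(\<Prod>i\<in>T \<union> V. ?y i) = (\<Prod>i\<in>T. ?y i) * (\<Prod>i\<in>V. ?y i)"
      using fT fV V by (intro prod.union_disjoint) auto
    moreover have "(\<Prod>i\<in>T \<union> V. ?y i) = t3 ^ card ((T \<union> V) \<inter> S) * t2 ^ card ((T \<union> V) - S) * (\<Prod>i\<in>(T \<union> V) - S. xh i)"
      using fT fV by (intro yprod) auto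
    ultimately show "(\<Prod>i\<in>V. ?y i) * (t1 ^ card T * (\<Prod>i\<in>T. ?y i) * g T)
      = (g T * (\<Prod>i\<in>(T \<union> V) - S. xh i)) * t1 ^ card T * t2 ^ card ((T \<union> V) - S) * t3 ^ card ((T \<union> V) \<inter> S)"
      by (simp add: mult_ac)
  qed
  finally show "(\<Prod>i\<in>U-T. 1 + ?y i) * (t1 ^ card T * (\<Prod>i\<in>T. ?y i) * g T)
      = (\<Sum>V\<in>Pow (U-T). (g T * (\<Prod>i\<in>(T \<union> V) - S. xh i)) * t1 ^ card T * t2 ^ card ((T \<union> V) - S) * t3 ^ card ((T \<union> V) \<inter> S))" .
qed

lemma sum3_cart:
  "(\<Sum>a\<le>N. \<Sum>b\<le>N. \<Sum>d\<le>N. H a b d) = (\<Sum>k\<in>{..N} \<times> {..N} \<times> {..N}. H (fst k) (fst (snd k)) (snd (snd k)))"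
  by (simp add: sum.cartesian_product split_def)

lemma group3:
  fixes h :: "'q \<Rightarrow> real" and ka kb kd :: "'q \<Rightarrow> nat"
  assumes "finite P" "\<forall>q\<in>P. ka q \<le> N \<and> kb q \<le> N \<and> kd q \<le> N"
  shows "(\<Sum>q\<in>P. h q * t1 ^ ka q * t2 ^ kb q * t3 ^ kd q)
    = (\<Sum>a\<le>N. \<Sum>b\<le>N. \<Sum>d\<le>N. (\<Sum>q\<in>{q\<in>P. ka q = a \<and> kb q = b \<and> kd q = d}. h q) * t1 ^ a * t2 ^ b * t3 ^ d)"
proof -
  let ?K = "{..N} \<times> {..N} \<times> {..N}"
  let ?k = "\<lambda>q. (ka q, kb q, kd q)"
  have "(\<Sum>q\<in>P. h q * t1 ^ ka q * t2 ^ kb q * t3 ^ kd q)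
     = (\<Sum>k\<in>?K. \<Sum>q\<in>{q\<in>P. ?k q = k}. h q * t1 ^ ka q * t2 ^ kb q * t3 ^ kd q)"
    by (rule sum.group[symmetric]) (use assms in auto)
  also have "\<dots> = (\<Sum>k\<in>?K. (\<Sum>q\<in>{q\<in>P. ka q = fst k \<and> kb q = fst (snd k) \<and> kd q = snd (snd k)}. h q)
        * t1 ^ fst k * t2 ^ fst (snd k) * t3 ^ snd (snd k))"
  proof (rule sum.cong[OF refl])
    fix k :: "nat \<times> nat \<times> nat"
    have e: "{q\<in>P. ?k q = k} = {q\<in>P. ka q = fst k \<and> kb q = fst (snd k) \<and> kd q = snd (snd k)}"
      by (cases k) auto
    show "(\<Sum>q\<in>{q\<in>P. ?k q = k}. h q * t1 ^ ka q * t2 ^ kb q * t3 ^ kd q) =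
      (\<Sum>q\<in>{q\<in>P. ka q = fst k \<and> kb q = fst (snd k) \<and> kd q = snd (snd k)}. h q) * t1 ^ fst k * t2 ^ fst (snd k) * t3 ^ snd (snd k)"
      unfolding e sum_distrib_right by (intro sum.cong refl) auto
  qed
  also have "\<dots> = (\<Sum>a\<le>N. \<Sum>b\<le>N. \<Sum>d\<le>N. (\<Sum>q\<in>{q\<in>P. ka q = a \<and> kb q = b \<and> kd q = d}. h q) * t1 ^ a * t2 ^ b * t3 ^ d)"
    by (rule sum3_cart[symmetric])
  finally show ?thesis .
qed

definition Cf :: "nat set \<Rightarrow> nat set \<Rightarrow> (nat \<Rightarrow> real) \<Rightarrow> (nat set \<Rightarrow> real) \<Rightarrow> nat \<Rightarrow> nat \<Rightarrow> nat \<Rightarrow> real" where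
  "Cf U S xh g a b d = (\<Sum>q\<in>{q\<in>Sigma (Pow U) (\<lambda>T. Pow (U-T)). card (fst q) = a \<and> card ((fst q \<union> snd q) - S) = b \<and> card ((fst q \<union> snd q) \<inter> S) = d}.
      g (fst q) * (\<Prod>i\<in>(fst q \<union> snd q) - S. xh i))"

lemma F_poly:
  assumes "finite U"
  shows "(\<Sum>T\<in>Pow U. (\<Prod>i\<in>U-T. 1 + yvec S xh t2 t3 i) * (t1 ^ card T * (\<Prod>i\<in>T. yvec S xh t2 t3 i) * g T))
    = (\<Sum>a\<le>card U. \<Sum>b\<le>card U. \<Sum>d\<le>card U. Cf U S xh g a b d * t1 ^ a * t2 ^ b * t3 ^ d)"
proof -
  let ?P = "Sigma (Pow U) (\<lambda>T. Pow (U-T))"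
  have fP: "finite ?P" using assms by auto
  have "(\<Sum>T\<in>Pow U. (\<Prod>i\<in>U-T. 1 + yvec S xh t2 t3 i) * (t1 ^ card T * (\<Prod>i\<in>T. yvec S xh t2 t3 i) * g T))
     = (\<Sum>T\<in>Pow U. \<Sum>V\<in>Pow (U-T). (g T * (\<Prod>i\<in>(T \<union> V) - S. xh i)) * t1 ^ card T * t2 ^ card ((T \<union> V) - S) * t3 ^ card ((T \<union> V) \<inter> S))"
    by (rule expand2[OF assms])
  also have "\<dots> = (\<Sum>q\<in>?P. (g (fst q) * (\<Prod>i\<in>(fst q \<union> snd q) - S. xh i)) * t1 ^ card (fst q) * t2 ^ card ((fst q \<union> snd q) - S) * t3 ^ card ((fst q \<union> snd q) \<inter> S))"
    using assms by (subst sum.Sigma) (auto simp: split_def)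
  also have "\<dots> = (\<Sum>a\<le>card U. \<Sum>b\<le>card U. \<Sum>d\<le>card U. Cf U S xh g a b d * t1 ^ a * t2 ^ b * t3 ^ d)"
    unfolding Cf_def
  proof (rule group3[OF fP])
    show "\<forall>q\<in>?P. card (fst q) \<le> card U \<and> card ((fst q \<union> snd q) - S) \<le> card U \<and> card ((fst q \<union> snd q) \<inter> S) \<le> card U"
      using assms by (auto intro!: card_mono)
  qed
  finally show ?thesis .
qed



lemma Cf_zero:
  assumes "finite U" "card U < a \<or> card U < b \<or> card U < d"
  shows "Cf U S xh g a b d = 0"
proof -
  have E: "{q\<in>Sigma (Pow U) (\<lambda>T. Pow (U-T)). card (fst q) = a \<and> card ((fst q \<union> snd q) - S) = b \<and> card ((fst q \<union> snd q) \<inter> S) = d} = {}"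
  proof (rule ccontr)
    assume "\<not> ?thesis"
    then obtain T V where "T \<subseteq> U" "V \<subseteq> U - T" "card T = a" "card ((T \<union> V) - S) = b" "card ((T \<union> V) \<inter> S) = d"
      by auto
    moreover have "card T \<le> card U" "card ((T \<union> V) - S) \<le> card U" "card ((T \<union> V) \<inter> S) \<le> card U"
      using calculation assms(1) by (auto intro!: card_mono)
    ultimately show False using assms(2) by auto
  qed
  show ?thesis unfolding Cf_def E by simp
qed

lemma Cf_coef:
  assumes fU: "finite U" and SU: "S \<subseteq> U" and sk: "card S \<le> k"
    and gD: "\<And>T. T \<subseteq> U \<Longrightarrow> card T = m \<Longrightarrow> g T = D T"
  shows "Cf U S xh g m (k - card S) (card S) =
    (\<Sum>R\<in>{R. R \<subseteq> U \<and> card R = m \<and> card (R - S) \<le> k - card S}.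
       (\<Prod>j\<in>R - S. xh j) * D R *
       (\<Sum>W\<in>{W. W \<subseteq> U - (S \<union> R) \<and> card W = k - card S - card (R - S)}. \<Prod>j\<in>W. xh j))"
proof -
  let ?s = "card S"
  let ?RR = "{R. R \<subseteq> U \<and> card R = m \<and> card (R - S) \<le> k - ?s}"
  let ?WW = "\<lambda>R. {W. W \<subseteq> U - (S \<union> R) \<and> card W = k - ?s - card (R - S)}"
  let ?Q = "{q\<in>Sigma (Pow U) (\<lambda>T. Pow (U-T)). card (fst q) = m \<and> card ((fst q \<union> snd q) - S) = k - ?s \<and> card ((fst q \<union> snd q) \<inter> S) = ?s}"
  have fS: "finite S" using fU SU finite_subset by auto
  have fRR: "finite ?RR" by (rule finite_subset[of _ "Pow U"]) (use fU in auto)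
  have fWW: "finite (?WW R)" for R by (rule finite_subset[of _ "Pow U"]) (use fU in auto)
  have "(\<Sum>R\<in>?RR. (\<Prod>j\<in>R - S. xh j) * D R * (\<Sum>W\<in>?WW R. \<Prod>j\<in>W. xh j))
      = (\<Sum>R\<in>?RR. \<Sum>W\<in>?WW R. D R * ((\<Prod>j\<in>R - S. xh j) * (\<Prod>j\<in>W. xh j)))"
    by (simp add: sum_distrib_left mult_ac)
  also have "\<dots> = (\<Sum>b\<in>Sigma ?RR ?WW. D (fst b) * ((\<Prod>j\<in>fst b - S. xh j) * (\<Prod>j\<in>snd b. xh j)))"
    using fRR fWW by (subst sum.Sigma) (auto simp: split_def)
  finally have rhs: "(\<Sum>R\<in>?RR. (\<Prod>j\<in>R - S. xh j) * D R * (\<Sum>W\<in>?WW R. \<Prod>j\<in>W. xh j))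
     = (\<Sum>b\<in>Sigma ?RR ?WW. D (fst b) * ((\<Prod>j\<in>fst b - S. xh j) * (\<Prod>j\<in>snd b. xh j)))" .
  have "Cf U S xh g m (k - ?s) ?s = (\<Sum>q\<in>?Q. g (fst q) * (\<Prod>i\<in>(fst q \<union> snd q) - S. xh i))"
    unfolding Cf_def ..
  also have "\<dots> = (\<Sum>b\<in>Sigma ?RR ?WW. D (fst b) * ((\<Prod>j\<in>fst b - S. xh j) * (\<Prod>j\<in>snd b. xh j)))"
  proof (rule sum.reindex_bij_witness[where j = "\<lambda>q. (fst q, snd q - S)" and i = "\<lambda>b. (fst b, snd b \<union> (S - fst b))"])
    fix q assume q: "q \<in> ?Q"
    obtain T V where qTV: "q = (T,V)" by (cases q)
    have T: "T \<subseteq> U" and V: "V \<subseteq> U - T" and cT: "card T = m" and cb: "card ((T \<union> V) - S) = k - ?s"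
      and cd: "card ((T \<union> V) \<inter> S) = ?s" using q qTV by auto
    have fT: "finite T" "finite V" using T V fU by (auto intro: finite_subset[of _ U])
    have "(T \<union> V) \<inter> S = S" using cd fS by (intro card_subset_eq) auto
    hence SV: "S \<subseteq> T \<union> V" by auto
    have eqV: "(V - S) \<union> (S - T) = V" using SV V by auto
    have split: "(T \<union> V) - S = (T - S) \<union> (V - S)" by auto
    have disj: "(T - S) \<inter> (V - S) = {}" using V by auto
    have cs: "card (T - S) + card (V - S) = k - ?s"
      using cb fT unfolding split by (subst card_Un_disjoint[symmetric]) (use disj in auto)
    show "(fst (fst q, snd q - S), snd (fst q, snd q - S) \<union> (S - fst (fst q, snd q - S))) = q"
      using qTV eqV by simp
    have "card (T - S) \<le> k - ?s" using cs by linarith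
    moreover have "card (V - S) = k - ?s - card (T - S)" using cs by linarith
    moreover have "V - S \<subseteq> U - (S \<union> T)" using V by blast
    ultimately show "(fst q, snd q - S) \<in> Sigma ?RR ?WW"
      using qTV T cT by simp
    have "g T = D T" using gD T cT by simp
    moreover have "(\<Prod>i\<in>(T \<union> V) - S. xh i) = (\<Prod>j\<in>T - S. xh j) * (\<Prod>j\<in>V - S. xh j)"
      unfolding split using fT disj by (intro prod.union_disjoint) auto
    ultimately show "D (fst (fst q, snd q - S)) * ((\<Prod>j\<in>fst (fst q, snd q - S) - S. xh j) * (\<Prod>j\<in>snd (fst q, snd q - S). xh j))
        = g (fst q) * (\<Prod>i\<in>(fst q \<union> snd q) - S. xh i)" using qTV by simp
  next
    fix b assume b: "b \<in> Sigma ?RR ?WW"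
    obtain R W where bRW: "b = (R,W)" by (cases b)
    have R: "R \<subseteq> U" and cR: "card R = m" and cRS: "card (R - S) \<le> k - ?s"
      and W: "W \<subseteq> U - (S \<union> R)" and cW: "card W = k - ?s - card (R - S)" using b bRW by auto
    have fR: "finite R" "finite W" using R W fU by (auto intro: finite_subset[of _ U])
    show "(fst (fst b, snd b \<union> (S - fst b)), snd (fst b, snd b \<union> (S - fst b)) - S) = b"
      using bRW W by auto
    have e1: "(R \<union> (W \<union> (S - R))) - S = (R - S) \<union> W" using W by auto
    have e2: "(R \<union> (W \<union> (S - R))) \<inter> S = S" by auto
    have c1: "card ((R - S) \<union> W) = k - ?s"
      using fR W cW cRS by (subst card_Un_disjoint) auto
    have "W \<union> (S - R) \<subseteq> U - R" using W SU by blast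
    thus "(fst b, snd b \<union> (S - fst b)) \<in> ?Q"
      using R cR c1 unfolding bRW by (simp add: e1 e2)
  qed
  finally show ?thesis using rhs by simp
qed



theorem proposition3:
  fixes A :: "real mat" and m k n :: nat and xh :: "nat \<Rightarrow> real" and S :: "nat set"
  assumes "0 < m" and "m \<le> k" and "k \<le> n"
    and "dim_row A = m" and "dim_col A = n"
    and "optimal_sol A k xh"
    and "S \<subseteq> {0..<n}" and "card S \<le> k"
  shows "(\<exists>c. poly3_rep c (Fdet A S xh)) \<and>
    (\<forall>c. poly3_rep c (Fdet A S xh) \<longrightarrow>
      c m (k - card S) (card S) =
        (\<Sum>R\<in>{R. R \<subseteq> {0..<n} \<and> card R = m \<and> card (R - S) \<le> k - card S}.
           (\<Prod>j\<in>R - S. xh j) * det (outer_sum A (\<lambda>_. 1) R) *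
           (\<Sum>W\<in>{W. W \<subseteq> {0..<n} - (S \<union> R) \<and> card W = k - card S - card (R - S)}.
              \<Prod>j\<in>W. xh j)))"
proof -
  have "feasible n k xh" using assms(5,6) by (simp add: optimal_sol_def)
  hence xpos: "\<forall>i<n. 0 \<le> xh i" by (simp add: feasible_def)
  define U where "U = {0..<n}"
  define G where "G = (\<lambda>i j. \<Sum>p=0..<m. A $$ (p,i) * A $$ (p,j))"
  define g where "g = (\<lambda>T. detS T G)"
  define C where "C = Cf U S xh g"
  have fU: "finite U" and cardU: "card U = n" by (simp_all add: U_def)
  have Frep: "Fdet A S xh t1 t2 t3 = (\<Sum>a\<le>n. \<Sum>b\<le>n. \<Sum>d\<le>n. C a b d * t1 ^ a * t2 ^ b * t3 ^ d)"
    if "0 \<le> t2" "0 \<le> t3" for t1 t2 t3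
  proof -
    have "Fdet A S xh t1 t2 t3 = (\<Sum>T\<in>Pow U. (\<Prod>i\<in>U-T. 1 + yvec S xh t2 t3 i) *
       (t1 ^ card T * (\<Prod>i\<in>T. yvec S xh t2 t3 i) * g T))"
      using F_expand[OF assms(4,5) xpos that, of S t1] by (simp add: U_def g_def G_def)
    also have "\<dots> = (\<Sum>a\<le>card U. \<Sum>b\<le>card U. \<Sum>d\<le>card U. Cf U S xh g a b d * t1 ^ a * t2 ^ b * t3 ^ d)"
      by (rule F_poly[OF fU])
    finally show ?thesis by (simp add: cardU C_def)
  qed
  have C0: "\<forall>a b d. (n < a \<or> n < b \<or> n < d) \<longrightarrow> C a b d = 0"
    using Cf_zero[OF fU] cardU unfolding C_def by auto
  have ex: "poly3_rep C (Fdet A S xh)" unfolding poly3_rep_def using Frep C0 by blast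
  have sn: "card S \<le> n" using assms(7) by (metis card_atLeastLessThan card_mono finite_atLeastLessThan diff_zero)
  have coefC: "C m (k - card S) (card S) =
        (\<Sum>R\<in>{R. R \<subseteq> {0..<n} \<and> card R = m \<and> card (R - S) \<le> k - card S}.
           (\<Prod>j\<in>R - S. xh j) * det (outer_sum A (\<lambda>_. 1) R) *
           (\<Sum>W\<in>{W. W \<subseteq> {0..<n} - (S \<union> R) \<and> card W = k - card S - card (R - S)}.
              \<Prod>j\<in>W. xh j))"
  proof -
    have SU: "S \<subseteq> U" using assms(7) by (simp add: U_def)
    have "Cf U S xh g m (k - card S) (card S) =
        (\<Sum>R\<in>{R. R \<subseteq> U \<and> card R = m \<and> card (R - S) \<le> k - card S}.
           (\<Prod>j\<in>R - S. xh j) * det (outer_sum A (\<lambda>_. 1) R) *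
           (\<Sum>W\<in>{W. W \<subseteq> U - (S \<union> R) \<and> card W = k - card S - card (R - S)}.
              \<Prod>j\<in>W. xh j))"
    proof (rule Cf_coef[OF fU SU assms(8)])
      fix T assume "T \<subseteq> U" "card T = m"
      thus "g T = det (outer_sum A (\<lambda>_. 1) T)"
        unfolding g_def G_def U_def using gram_det[OF assms(4)] assms(5) by simp
    qed
    thus ?thesis by (simp add: C_def U_def)
  qed
  have uniq: "c m (k - card S) (card S) = C m (k - card S) (card S)" if rep: "poly3_rep c (Fdet A S xh)" for c
  proof -
    obtain N where cN: "\<forall>a b d. (N < a \<or> N < b \<or> N < d) \<longrightarrow> c a b d = 0"
      and cF: "\<forall>t1 t2 t3. 0 \<le> t2 \<longrightarrow> 0 \<le> t3 \<longrightarrow>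
        Fdet A S xh t1 t2 t3 = (\<Sum>a\<le>N. \<Sum>b\<le>N. \<Sum>d\<le>N. c a b d * t1 ^ a * t2 ^ b * t3 ^ d)"
      using rep unfolding poly3_rep_def by blast
    define M where "M = max N n"
    have Z: "(\<Sum>a\<le>M. \<Sum>b\<le>M. \<Sum>d\<le>M. (\<lambda>a b d. c a b d - C a b d) a b d * t1 ^ a * t2 ^ b * t3 ^ d) = 0"
      if "0 \<le> t2" "0 \<le> t3" for t1 t2 t3
    proof -
      have e1: "(\<Sum>a\<le>M. \<Sum>b\<le>M. \<Sum>d\<le>M. c a b d * t1 ^ a * t2 ^ b * t3 ^ d) = Fdet A S xh t1 t2 t3"
        using sum3_ext[OF cN, of M] cF that by (simp add: M_def)
      have e2: "(\<Sum>a\<le>M. \<Sum>b\<le>M. \<Sum>d\<le>M. C a b d * t1 ^ a * t2 ^ b * t3 ^ d) = Fdet A S xh t1 t2 t3"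
        using sum3_ext[OF C0, of M] Frep that by (simp add: M_def)
      have "(\<Sum>a\<le>M. \<Sum>b\<le>M. \<Sum>d\<le>M. (\<lambda>a b d. c a b d - C a b d) a b d * t1 ^ a * t2 ^ b * t3 ^ d)
        = (\<Sum>a\<le>M. \<Sum>b\<le>M. \<Sum>d\<le>M. c a b d * t1 ^ a * t2 ^ b * t3 ^ d) - (\<Sum>a\<le>M. \<Sum>b\<le>M. \<Sum>d\<le>M. C a b d * t1 ^ a * t2 ^ b * t3 ^ d)"
        by (simp add: left_diff_distrib sum_subtractf)
      thus ?thesis using e1 e2 by simp
    qed
    have "(\<lambda>a b d. c a b d - C a b d) m (k - card S) (card S) = 0"
      by (rule poly3_unique[OF Z]) (use assms(2,3) sn in \<open>auto simp: M_def\<close>)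
    thus ?thesis by simp
  qed
  show ?thesis using ex uniq coefC by auto
qed


end
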